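(* Let $s\ge 3$ and let $\lambda$ be an $(s,s+1,s+2)$-core partition of maximum size. Then there exist integers $1\le i\le s-1$ and $0\le j\le\lfloor (s-i+1)/2\rfloor$ such that $\lambda=\lambda_{i,j}$.
   Context: An $(s,s+1,s+2)$-core is a partition with no hook length divisible by $s$, $s+1$ or $s+2$. The $\beta$-set of a partition is the set of hook lengths in its first column; a partition is uniquely determined by its $\beta$-set, and for a finite set $\{h_1>h_2>\cdots>h_m\}$ of positive integers the unique partition with this $\beta$-set is $(h_1-(m-1),h_2-(m-2),\ldots,h_{m-1}-1,h_m)$. For $s\ge 3$, $1\le i\le s-1$, define $\beta_{i,0}=\bigcup_{k\ge 0}\{i+1+k(s+2),\ldots,(k+1)s-1\}$ (empty intervals omitted), and for $1\le j\le\lfloor(s-i+1)/2\rfloor$ define $\beta_{i,j}=\beta_{i,0}\cup\{i+p(s+2): 0\le p\le j-1\}$. Let $\lambda_{i,j}$ be the unique partition with $\beta(\lambda_{i,j})=\beta_{i,j}$ (each $\lambda_{i,j}$ is an $(s,s+1,s+2)$-core). *)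

theory Defs
  imports Main
begin

definition is_partition :: "nat list \<Rightarrow> bool" where
  "is_partition la \<longleftrightarrow> sorted_wrt (\<ge>) la \<and> 0 \<notin> set la"

definition psize :: "nat list \<Rightarrow> nat" where
  "psize la = sum_list la"

text \<open>Hook length of cell (r,c) (0-indexed): arm + leg + 1.\<close>
definition hook :: "nat list \<Rightarrow> nat \<Rightarrow> nat \<Rightarrow> nat" where
  "hook la r c = (la ! r - c) + card {k. r < k \<and> k < length la \<and> c < la ! k}"

definition hooks :: "nat list \<Rightarrow> nat set" where
  "hooks la = {hook la r c | r c. r < length la \<and> c < la ! r}"

definition is_core3 :: "nat \<Rightarrow> nat list \<Rightarrow> bool" where
  "is_core3 s la \<longleftrightarrow> (\<forall>h \<in> hooks la. \<not> s dvd h \<and> \<not> (s+1) dvd h \<and> \<not> (s+2) dvd h)"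

definition beta :: "nat list \<Rightarrow> nat set" where
  "beta la = {hook la r 0 | r. r < length la}"

text \<open>The partition with beta-set {h1 > ... > hm}: (h1-(m-1), ..., h_{m-1}-1, hm).\<close>
definition partition_of_beta :: "nat set \<Rightarrow> nat list" where
  "partition_of_beta B = (let hs = rev (sorted_list_of_set B); m = length hs
     in map (\<lambda>k. hs ! k - (m - 1 - k)) [0..<m])"

definition beta0 :: "nat \<Rightarrow> nat \<Rightarrow> nat set" where
  "beta0 s i = {x. \<exists>k. i + 1 + k * (s + 2) \<le> x \<and> x + 1 \<le> (k + 1) * s}"

definition betaij :: "nat \<Rightarrow> nat \<Rightarrow> nat \<Rightarrow> nat set" where
  "betaij s i j = beta0 s i \<union> {i + p * (s + 2) | p. p < j}"

definition lambdaij :: "nat \<Rightarrow> nat \<Rightarrow> nat \<Rightarrow> nat list" where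
  "lambdaij s i j = partition_of_beta (betaij s i j)"

end

theory Submission
  imports Defs
begin


lemma dec_steps:
  fixes g :: "nat \<Rightarrow> nat"
  assumes "\<And>i j. i < j \<Longrightarrow> j < m \<Longrightarrow> g j < g i" "i \<le> j" "j < m"
  shows "g j + (j - i) \<le> g i"
  using assms(2,3)
proof (induction j)
  case 0 then show ?case by simp
next
  case (Suc j)
  show ?case
  proof (cases "i = Suc j")
    case True then show ?thesis by simp
  next
    case False
    then have "i \<le> j" using Suc by simp
    with Suc have "g j + (j - i) \<le> g i" by simp
    moreover have "g (Suc j) < g j" using assms(1) Suc by simp
    ultimately show ?thesis using \<open>i \<le> j\<close> by simp
  qed
qed

lemma part_mono: "is_partition la \<Longrightarrow> i \<le> j \<Longrightarrow> j < length la \<Longrightarrow> la!j \<le> la!i"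
  unfolding is_partition_def
  by (metis le_eq_less_or_eq order_le_less_trans sorted_wrt_iff_nth_less)

lemma part_pos: "is_partition la \<Longrightarrow> k < length la \<Longrightarrow> 0 < la!k"
  unfolding is_partition_def by (metis gr0I nth_mem)

definition bv :: "nat list \<Rightarrow> nat \<Rightarrow> nat" where
  "bv la r = la!r + (length la - 1 - r)"

lemma bv_strict: "is_partition la \<Longrightarrow> i < j \<Longrightarrow> j < length la \<Longrightarrow> bv la j < bv la i"
  unfolding bv_def using part_mono[of la i j] by simp

lemma bv_steps: "is_partition la \<Longrightarrow> i \<le> j \<Longrightarrow> j < length la \<Longrightarrow> bv la j + (j - i) \<le> bv la i"
  by (rule dec_steps[where m="length la"]) (auto intro: bv_strict)

lemma hook0: "is_partition la \<Longrightarrow> r < length la \<Longrightarrow> hook la r 0 = bv la r"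
proof -
  assume a: "is_partition la" "r < length la"
  have "{k. r < k \<and> k < length la \<and> 0 < la!k} = {r<..<length la}"
    using part_pos[OF a(1)] by auto
  then show ?thesis unfolding hook_def bv_def by simp
qed

lemma beta_eq: assumes "is_partition la" shows "beta la = bv la ` {..<length la}"
  unfolding beta_def using hook0[OF assms] by (auto simp: image_iff) (metis)

lemma block:
  fixes r m :: nat
  assumes "r < m" "P r" "\<And>k k'. k \<le> k' \<Longrightarrow> k' < m \<Longrightarrow> P k' \<Longrightarrow> P k"
  shows "\<exists>e. r \<le> e \<and> e < m \<and> (\<forall>k<m. P k \<longleftrightarrow> k \<le> e)"
proof -
  let ?S = "{k. k < m \<and> P k}"
  have fin: "finite ?S" by (rule finite_subset[of _ "{..<m}"]) auto
  have ne: "r \<in> ?S" using assms by simp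
  define e where "e = Max ?S"
  have "e \<in> ?S" unfolding e_def using fin ne by (intro Max_in) auto
  moreover have "r \<le> e" unfolding e_def using fin ne by simp
  moreover have "\<forall>k<m. P k \<longleftrightarrow> k \<le> e"
  proof (intro allI impI iffI)
    fix k assume "k < m" "P k" then show "k \<le> e" unfolding e_def using fin by simp
  next
    fix k assume "k < m" "k \<le> e" then show "P k" using assms(3) \<open>e \<in> ?S\<close> by blast
  qed
  ultimately show ?thesis by blast
qed

lemma hooks_sub:
  assumes p: "is_partition la" and r: "r < length la" and c: "c < la!r"
  shows "\<exists>y. y < bv la r \<and> y \<notin> bv la ` {..<length la} \<and> hook la r c = bv la r - y"
proof -
  define m where "m = length la"
  have dc: "\<And>k k'. k \<le> k' \<Longrightarrow> k' < m \<Longrightarrow> c < la!k' \<Longrightarrow> c < la!k"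
    using part_mono[OF p] unfolding m_def by (meson order_less_le_trans)
  have "\<exists>e. r \<le> e \<and> e < m \<and> (\<forall>k<m. c < la!k \<longleftrightarrow> k \<le> e)"
    by (rule block) (use r c dc in \<open>auto simp: m_def\<close>)
  then obtain e where e: "r \<le> e" "e < m" "\<forall>k<m. c < la!k \<longleftrightarrow> k \<le> e" by blast
  have "{k. r < k \<and> k < length la \<and> c < la!k} = {r<..e}"
    using e unfolding m_def by auto
  then have hk: "hook la r c = la!r - c + (e - r)" unfolding hook_def by simp
  define y where "y = c + (m - 1 - e)"
  have "y \<notin> bv la ` {..<length la}"
  proof
    assume "y \<in> bv la ` {..<length la}"
    then obtain k where k: "k < m" "y = bv la k" unfolding m_def by auto
    have bk: "bv la k = la!k + (m - 1 - k)" unfolding bv_def m_def by simp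
    show False
    proof (cases "k \<le> e")
      case True
      then have "c < la!k" using e k by simp
      moreover have "m - 1 - e \<le> m - 1 - k" using True by simp
      ultimately show False using k bk unfolding y_def by linarith
    next
      case False
      then have "la!k \<le> c" using e k by (meson not_less)
      moreover have "m - 1 - k < m - 1 - e" using False k by simp
      ultimately show False using k bk unfolding y_def by linarith
    qed
  qed
  moreover have br: "bv la r = la!r + (m - 1 - r)" unfolding bv_def m_def by simp
  moreover have "m - 1 - r = (m - 1 - e) + (e - r)" using e by simp
  moreover have "y < bv la r" using c br \<open>m - 1 - r = (m - 1 - e) + (e - r)\<close> unfolding y_def by linarith
  moreover have "hook la r c = bv la r - y" using hk c br \<open>m - 1 - r = (m - 1 - e) + (e - r)\<close>
    unfolding y_def by simp
  ultimately show ?thesis by blast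
qed

lemma hooks_sup:
  assumes p: "is_partition la" and r: "r < length la" and y: "y < bv la r"
    and yn: "y \<notin> bv la ` {..<length la}"
  shows "\<exists>c<la!r. hook la r c = bv la r - y"
proof -
  define m where "m = length la"
  have bvk: "\<And>k. bv la k = la!k + (m - 1 - k)" unfolding bv_def m_def by simp
  have dc: "\<And>k k'. k \<le> k' \<Longrightarrow> k' < m \<Longrightarrow> y < bv la k' \<Longrightarrow> y < bv la k"
    using bv_strict[OF p] unfolding m_def by (metis le_eq_less_or_eq order_less_trans)
  have "\<exists>e. r \<le> e \<and> e < m \<and> (\<forall>k<m. y < bv la k \<longleftrightarrow> k \<le> e)"
    by (rule block) (use r y dc in \<open>auto simp: m_def\<close>)
  then obtain e where e: "r \<le> e" "e < m" "\<forall>k<m. y < bv la k \<longleftrightarrow> k \<le> e" by blast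
  define q where "q = m - 1 - e"
  have ltafter: "bv la k < y" if "e < k" "k < m" for k
  proof -
    have "\<not> y < bv la k" using e that by auto
    moreover have "bv la k \<noteq> y" using yn that unfolding m_def by auto
    ultimately show ?thesis by simp
  qed
  have ge: "q \<le> y"
  proof (cases "Suc e < m")
    case True
    have "bv la (Suc e) < y" using ltafter True by simp
    moreover have "bv la (m - 1) + (m - 1 - Suc e) \<le> bv la (Suc e)"
      using bv_steps[OF p, of "Suc e" "m - 1"] True unfolding m_def by simp
    moreover have "0 < la!(m - 1)" using part_pos[OF p, of "m - 1"] True unfolding m_def by simp
    moreover have "m - 1 - Suc e + 1 = q" using True unfolding q_def by simp
    ultimately show ?thesis using bvk[of "m - 1"] by linarith
  next
    case False then show ?thesis using e unfolding q_def by simp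
  qed
  define c where "c = y - q"
  have above: "c < la!k" if "k \<le> e" for k
  proof -
    have "y < bv la e" using e by simp
    then have "c < la!e" unfolding c_def using ge bvk[of e] unfolding q_def by linarith
    moreover have "la!e \<le> la!k" using part_mono[OF p that] e unfolding m_def by simp
    ultimately show ?thesis by simp
  qed
  have below: "la!k \<le> c" if "e < k" "k < m" for k
  proof -
    have s1: "bv la k + (k - Suc e) \<le> bv la (Suc e)"
      using bv_steps[OF p, of "Suc e" k] that unfolding m_def by simp
    have "bv la (Suc e) < y" using ltafter that by simp
    moreover have "(m - 1 - k) + (k - Suc e) + 1 = q" using that unfolding q_def by simp
    ultimately show ?thesis using s1 bvk[of k] ge unfolding c_def by linarith
  qed
  have "{k. r < k \<and> k < length la \<and> c < la!k} = {r<..e}"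
    using above below e unfolding m_def by (auto simp: not_le[symmetric])
  then have hk: "hook la r c = la!r - c + (e - r)" unfolding hook_def by simp
  have cr: "c < la!r" using above e by simp
  have "m - 1 - r = q + (e - r)" using e unfolding q_def by simp
  then have "hook la r c = bv la r - y" using hk ge cr bvk[of r] unfolding c_def by (simp add: add.assoc)
  with cr show ?thesis by blast
qed

lemma hooks_char: assumes p: "is_partition la" shows
  "hooks la = {bv la r - y | r y. r < length la \<and> y < bv la r \<and> y \<notin> bv la ` {..<length la}}"
proof (rule set_eqI; rule iffI)
  fix h assume "h \<in> hooks la"
  then obtain r c where "r < length la" "c < la!r" "h = hook la r c" unfolding hooks_def by blast
  then show "h \<in> {bv la r - y | r y. r < length la \<and> y < bv la r \<and> y \<notin> bv la ` {..<length la}}"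
    using hooks_sub[OF p] by blast
next
  fix h assume "h \<in> {bv la r - y | r y. r < length la \<and> y < bv la r \<and> y \<notin> bv la ` {..<length la}}"
  then obtain r y where "r < length la" "y < bv la r" "y \<notin> bv la ` {..<length la}" "h = bv la r - y" by blast
  moreover then obtain c where "c < la!r" "hook la r c = bv la r - y" using hooks_sup[OF p] by blast
  ultimately show "h \<in> hooks la" unfolding hooks_def mem_Collect_eq by (intro exI[of _ r] exI[of _ c]) simp
qed



definition hsB :: "nat set \<Rightarrow> nat list" where "hsB B = rev (sorted_list_of_set B)"

lemma hs_len: "finite B \<Longrightarrow> length (hsB B) = card B"
  unfolding hsB_def by simp

lemma hs_set: "finite B \<Longrightarrow> set (hsB B) = B"
  unfolding hsB_def by simp

lemma hs_strict: assumes "finite B" "i < j" "j < card B" shows "hsB B ! j < hsB B ! i"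
proof -
  let ?xs = "sorted_list_of_set B"
  have so: "sorted_wrt (<) ?xs" by simp
  have len: "length ?xs = card B" using assms by simp
  have "?xs ! (card B - Suc j) < ?xs ! (card B - Suc i)"
    using so assms len by (simp add: sorted_wrt_iff_nth_less)
  then show ?thesis unfolding hsB_def using assms len by (simp add: rev_nth)
qed

lemma hs_in: "finite B \<Longrightarrow> k < card B \<Longrightarrow> hsB B ! k \<in> B"
  using hs_set hs_len by (metis nth_mem)

lemma hs_ge: assumes "finite B" "0 \<notin> B" "k < card B" shows "card B - k \<le> hsB B ! k"
proof -
  have "hsB B ! (card B - 1) + (card B - 1 - k) \<le> hsB B ! k"
    by (rule dec_steps[where m="card B"]) (use assms hs_strict in auto)
  moreover have "hsB B ! (card B - 1) \<in> B" using assms hs_in by simp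
  then have "0 < hsB B ! (card B - 1)" using assms by (metis gr0I)
  ultimately show ?thesis using assms by linarith
qed

lemma pob_eq: "finite B \<Longrightarrow> partition_of_beta B = map (\<lambda>k. hsB B ! k - (card B - 1 - k)) [0..<card B]"
  unfolding partition_of_beta_def Let_def using hs_len by (simp add: hsB_def)

lemma pob_len: "finite B \<Longrightarrow> length (partition_of_beta B) = card B"
  using pob_eq by simp

lemma pob_nth: "finite B \<Longrightarrow> k < card B \<Longrightarrow> partition_of_beta B ! k = hsB B ! k - (card B - 1 - k)"
  using pob_eq by simp

lemma pob_part: assumes "finite B" "0 \<notin> B" shows "is_partition (partition_of_beta B)"
  unfolding is_partition_def
proof
  show "sorted_wrt (\<ge>) (partition_of_beta B)"
  proof (subst sorted_wrt_iff_nth_less, intro allI impI)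
    fix i j assume ij: "i < j" "j < length (partition_of_beta B)"
    then have j: "j < card B" using pob_len assms by simp
    have "hsB B ! j + (j - i) \<le> hsB B ! i"
      by (rule dec_steps[where m="card B"]) (use assms hs_strict ij j in auto)
    moreover have "card B - j \<le> hsB B ! j" using hs_ge assms j by simp
    ultimately show "partition_of_beta B ! j \<le> partition_of_beta B ! i"
      using pob_nth assms j ij by simp
  qed
next
  show "0 \<notin> set (partition_of_beta B)"
  proof
    assume "0 \<in> set (partition_of_beta B)"
    then obtain k where k: "k < card B" "partition_of_beta B ! k = 0"
      using pob_len assms by (metis in_set_conv_nth)
    have "card B - k \<le> hsB B ! k" using hs_ge assms k by simp
    then show False using k pob_nth assms by simp
  qed
qed

lemma pob_bv: assumes "finite B" "0 \<notin> B" "k < card B"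
  shows "bv (partition_of_beta B) k = hsB B ! k"
  using pob_nth[OF assms(1,3)] hs_ge[OF assms] pob_len[OF assms(1)] assms(3)
  unfolding bv_def by simp

lemma pob_bv_img: assumes "finite B" "0 \<notin> B"
  shows "bv (partition_of_beta B) ` {..<length (partition_of_beta B)} = B"
proof -
  have "bv (partition_of_beta B) ` {..<length (partition_of_beta B)} = (\<lambda>k. hsB B ! k) ` {..<card B}"
    using pob_bv[OF assms] pob_len[OF assms(1)] by auto
  also have "\<dots> = set (hsB B)" using hs_len[OF assms(1)] by (auto simp: set_conv_nth)
  finally show ?thesis using hs_set assms by simp
qed

lemma pob_psize: assumes "finite B" "0 \<notin> B"
  shows "psize (partition_of_beta B) + (\<Sum>k<card B. k) = \<Sum> B"
proof -
  let ?m = "card B"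
  have "psize (partition_of_beta B) = (\<Sum>k<?m. hsB B ! k - (?m - 1 - k))"
    unfolding psize_def pob_eq[OF assms(1)]
    by (simp add: interv_sum_list_conv_sum_set_nat atLeast0LessThan)
  moreover have "(\<Sum>k<?m. k) = (\<Sum>k<?m. ?m - 1 - k)"
    using sum.nat_diff_reindex[of "\<lambda>k. k" ?m] by simp
  moreover have "(\<Sum>k<?m. hsB B ! k - (?m - 1 - k)) + (\<Sum>k<?m. ?m - 1 - k) = (\<Sum>k<?m. hsB B ! k)"
  proof (subst sum.distrib[symmetric], rule sum.cong)
    fix k assume "k \<in> {..<?m}"
    then have "?m - 1 - k \<le> hsB B ! k" using hs_ge[OF assms, of k] by simp
    then show "hsB B ! k - (?m - 1 - k) + (?m - 1 - k) = hsB B ! k" by simp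
  qed simp
  moreover have "(\<Sum>k<?m. hsB B ! k) = \<Sum> B"
  proof -
    have "(\<Sum>k<?m. hsB B ! k) = sum_list (hsB B)"
      using hs_len[OF assms(1)] by (metis sum_list_sum_nth atLeast0LessThan)
    also have "\<dots> = \<Sum> B" unfolding hsB_def using assms by (simp add: sum_list_distinct_conv_sum_set[where f="\<lambda>x. x", simplified])
    finally show ?thesis .
  qed
  ultimately show ?thesis by simp
qed

lemma beta_pob: assumes p: "is_partition la" shows "partition_of_beta (beta la) = la"
proof -
  define m where "m = length la"
  define B where "B = beta la"
  have B: "B = bv la ` {..<m}" using beta_eq[OF p] unfolding B_def m_def by simp
  have inj: "inj_on (bv la) {..<m}"
    by (rule inj_onI) (metis bv_strict[OF p] lessThan_iff linorder_neqE_nat m_def order_less_irrefl)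
  have cB: "card B = m" using B inj by (simp add: card_image)
  have fin: "finite B" using B by simp
  have so0: "sorted_wrt (>) (map (bv la) [0..<m])"
    unfolding sorted_wrt_iff_nth_less using bv_strict[OF p] unfolding m_def by auto
  have so: "sorted_wrt (<) (rev (map (bv la) [0..<m]))"
    using so0 by (simp add: sorted_wrt_rev)
  have "sorted_list_of_set B = rev (map (bv la) [0..<m])"
  proof -
    have "set (rev (map (bv la) [0..<m])) = B" using B by (auto simp: atLeast0LessThan)
    then have "sorted_wrt (<) (rev (map (bv la) [0..<m])) \<and> set (rev (map (bv la) [0..<m])) = B
       \<and> length (rev (map (bv la) [0..<m])) = card B" using so cB by simp
    then show ?thesis using sorted_list_of_set_unique[OF fin] by blast
  qed
  then have hs: "hsB B = map (bv la) [0..<m]" unfolding hsB_def by simp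
  have "partition_of_beta B = map (\<lambda>k. bv la k - (m - 1 - k)) [0..<m]"
    using pob_eq[OF fin] hs cB by simp
  also have "\<dots> = map (\<lambda>k. la ! k) [0..<m]" unfolding bv_def m_def by simp
  also have "\<dots> = la" unfolding m_def by (simp add: map_nth)
  finally show ?thesis unfolding B_def .
qed

lemma iter_sub:
  fixes t x q :: nat and B :: "nat set"
  assumes cl: "\<forall>x\<in>B. t \<le> x \<longrightarrow> x - t \<in> B" and xB: "x \<in> B"
  shows "t * q \<le> x \<Longrightarrow> x - t * q \<in> B"
proof (induction q)
  case 0 then show ?case using xB by simp
next
  case (Suc q)
  then have "x - t * q \<in> B" by simp
  moreover have "t \<le> x - t * q" using Suc.prems by simp
  ultimately have "x - t * q - t \<in> B" using cl by blast
  then show ?case by (simp add: algebra_simps)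
qed

lemma core_pob:
  assumes fin: "finite B" and z: "0 \<notin> B"
    and cl: "\<forall>x\<in>B. \<forall>t\<in>{s, s+1, s+2}. t \<le> x \<longrightarrow> x - t \<in> B"
  shows "is_core3 s (partition_of_beta B)"
  unfolding is_core3_def
proof
  fix h assume h: "h \<in> hooks (partition_of_beta B)"
  let ?mu = "partition_of_beta B"
  obtain r y where ry: "r < length ?mu" "y < bv ?mu r" "y \<notin> bv ?mu ` {..<length ?mu}" "h = bv ?mu r - y"
    using h hooks_char[OF pob_part[OF fin z]] by blast
  have yB: "y \<notin> B" using ry(3) pob_bv_img[OF fin z] by simp
  have xB: "bv ?mu r \<in> B" using ry(1) pob_bv_img[OF fin z] by auto
  have nd: "\<not> t dvd h" if t: "t \<in> {s, s+1, s+2}" for t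
  proof
    assume "t dvd h"
    then obtain q where q: "h = t * q" by blast
    have "t * q \<le> bv ?mu r" using ry q by simp
    moreover have "\<forall>x\<in>B. t \<le> x \<longrightarrow> x - t \<in> B" using cl t by blast
    ultimately have "bv ?mu r - t * q \<in> B" using iter_sub xB by blast
    moreover have "bv ?mu r - t * q = y" using ry q by simp
    ultimately show False using yB by simp
  qed
  then show "\<not> s dvd h \<and> \<not> (s + 1) dvd h \<and> \<not> (s + 2) dvd h" by simp
qed

lemma closed_beta:
  assumes p: "is_partition la" and c: "is_core3 s la" and s: "0 < s"
    and x: "x \<in> beta la" and t: "t \<in> {s, s+1, s+2}" and tx: "t \<le> x"
  shows "x - t \<in> beta la"
proof (rule ccontr)
  assume n: "x - t \<notin> beta la"
  obtain r where r: "r < length la" "x = bv la r" using x beta_eq[OF p] by auto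
  have t0: "0 < t" using t s by auto
  have "x - t < bv la r" using r t0 tx by simp
  moreover have "x - t \<notin> bv la ` {..<length la}" using n beta_eq[OF p] by simp
  moreover have "t = bv la r - (x - t)" using r tx by simp
  ultimately have "t \<in> hooks la"
    unfolding hooks_char[OF p] mem_Collect_eq using r(1)
    by (intro exI[of _ r] exI[of _ "x - t"]) simp
  then have "\<not> s dvd t \<and> \<not> (s+1) dvd t \<and> \<not> (s+2) dvd t" using c unfolding is_core3_def by blast
  moreover have "t = s \<or> t = s+1 \<or> t = s+2" using t by simp
  ultimately show False by auto
qed



definition lev :: "nat \<Rightarrow> nat \<Rightarrow> nat set" where
  "lev s k = {x. k*s + 2*k < x \<and> x < k*s + s}"

definition clsd :: "nat \<Rightarrow> nat set \<Rightarrow> bool" where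
  "clsd s B \<longleftrightarrow> finite B \<and> 0 \<notin> B \<and> (\<forall>x\<in>B. \<forall>t\<in>{s, s+1, s+2}. t \<le> x \<longrightarrow> x - t \<in> B)"

lemma lev_bound: "x \<in> lev s k \<Longrightarrow> 2*k + 2 \<le> s"
  unfolding lev_def by simp

lemma lev_pos: "x \<in> lev s k \<Longrightarrow> 0 < x"
  unfolding lev_def by simp

lemma lev_unique_aux: "x \<in> lev s k \<Longrightarrow> x \<in> lev s k' \<Longrightarrow> k < k' \<Longrightarrow> False"
proof -
  assume a: "x \<in> lev s k" "x \<in> lev s k'" "k < k'"
  have "(k+1)*s \<le> k'*s" using a(3) by (intro mult_le_mono1) simp
  then show False using a unfolding lev_def by (simp add: algebra_simps)
qed

lemma lev_unique: "x \<in> lev s k \<Longrightarrow> x \<in> lev s k' \<Longrightarrow> k = k'"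
  using lev_unique_aux by (metis linorder_neqE_nat)

lemma closed_lev:
  assumes c: "clsd s B" and s: "0 < s"
  shows "x \<in> B \<Longrightarrow> \<exists>k. x \<in> lev s k"
proof (induction x rule: less_induct)
  case (less x)
  have z: "0 \<notin> B" and cl: "\<forall>x\<in>B. \<forall>t\<in>{s, s+1, s+2}. t \<le> x \<longrightarrow> x - t \<in> B"
    using c unfolding clsd_def by auto
  show ?case
  proof (cases "x < s")
    case True
    moreover have "0 < x" using less.prems z by (metis gr0I)
    ultimately have "x \<in> lev s 0" unfolding lev_def by simp
    then show ?thesis by blast
  next
    case False
    have a1: "x - s \<in> B" using cl less.prems False by auto
    then have xs: "x \<noteq> s" using z by auto
    then have a2: "x - (s+1) \<in> B" using cl less.prems False by auto
    then have "x \<noteq> s + 1" using z by auto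
    then have x2: "s + 2 \<le> x" using False xs by simp
    then have a3: "x - (s+2) \<in> B" using cl less.prems by auto
    obtain k1 where k1: "x - (s+2) \<in> lev s k1" using less.IH[of "x - (s+2)"] a3 x2 s by auto
    obtain k2 where k2: "x - s \<in> lev s k2" using less.IH[of "x - s"] a1 x2 s by auto
    have "k2 \<le> k1"
    proof (rule ccontr)
      assume "\<not> k2 \<le> k1"
      then have kk: "k1 + 1 \<le> k2" by simp
      then have "(k1+1)*s \<le> k2*s" by (intro mult_le_mono1)
      then show False using k1 k2 x2 kk unfolding lev_def by (auto simp: algebra_simps)
    qed
    then have pk: "k2*s \<le> k1*s" by (intro mult_le_mono1)
    have f1: "k1*s + 2*k1 < x - (s+2)" "x - (s+2) < k1*s + s" using k1 unfolding lev_def by auto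
    have f2: "x - s < k2*s + s" using k2 unfolding lev_def by auto
    have "x \<in> lev s (Suc k1)" unfolding lev_def mem_Collect_eq mult_Suc mult_Suc_right
      using f1 f2 pk x2 by (intro conjI; linarith)
    then show ?thesis by blast
  qed
qed

lemma closed_sub: assumes "clsd s B" "0 < s" shows "B \<subseteq> (\<Union>k<s. lev s k)"
proof
  fix x assume "x \<in> B"
  then obtain k where k: "x \<in> lev s k" using closed_lev assms by blast
  then have "k < s" using lev_bound[OF k] by simp
  then show "x \<in> (\<Union>k<s. lev s k)" using k by blast
qed

definition cnt :: "nat \<Rightarrow> nat set \<Rightarrow> nat \<Rightarrow> nat" where
  "cnt s B k = card (B \<inter> lev s k)"

definition adm :: "nat \<Rightarrow> (nat \<Rightarrow> nat) \<Rightarrow> bool" where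
  "adm s n \<longleftrightarrow> n 0 + 1 \<le> s \<and> (\<forall>k. 0 < n (Suc k) \<longrightarrow> n (Suc k) + 2 \<le> n k)"

lemma adm_bound: assumes "adm s n" shows "0 < n k \<Longrightarrow> n k + 2*k + 1 \<le> s"
proof (induction k)
  case 0 then show ?case using assms unfolding adm_def by simp
next
  case (Suc k)
  then have "n (Suc k) + 2 \<le> n k" using assms unfolding adm_def by blast
  with Suc show ?case by simp
qed

lemma cnt_adm: assumes c: "clsd s B" and s: "0 < s" shows "adm s (cnt s B)"
  unfolding adm_def
proof
  have fin: "finite B" using c unfolding clsd_def by simp
  have "B \<inter> lev s 0 \<subseteq> {1..<s}" unfolding lev_def by auto
  then have "card (B \<inter> lev s 0) \<le> s - 1" by (metis card_atLeastLessThan card_mono finite_atLeastLessThan)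
  then show "cnt s B 0 + 1 \<le> s" unfolding cnt_def using s by simp
next
  show "\<forall>k. 0 < cnt s B (Suc k) \<longrightarrow> cnt s B (Suc k) + 2 \<le> cnt s B k"
  proof (intro allI impI)
    fix k assume pos: "0 < cnt s B (Suc k)"
    have fin: "finite B" and cl: "\<forall>x\<in>B. \<forall>t\<in>{s, s+1, s+2}. t \<le> x \<longrightarrow> x - t \<in> B"
      using c unfolding clsd_def by auto
    let ?C = "B \<inter> lev s (Suc k)"
    have finC: "finite ?C" using fin by simp
    have neC: "?C \<noteq> {}" using pos unfolding cnt_def by auto
    define a where "a = Max ?C"
    have aC: "a \<in> ?C" unfolding a_def using finC neC by (rule Max_in)
    have big: "\<And>x. x \<in> ?C \<Longrightarrow> s + 2 \<le> x \<and> x \<in> B \<and> k*s + 2*k + s + 2 < x \<and> x < k*s + s + s"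
      unfolding lev_def by (auto simp: algebra_simps)
    let ?f = "\<lambda>x. x - (s+2)"
    have inj: "inj_on ?f ?C"
      by (rule inj_onI) (use big in fastforce)
    have img: "?f ` ?C \<subseteq> B \<inter> lev s k"
    proof
      fix y assume "y \<in> ?f ` ?C"
      then obtain x where x: "x \<in> ?C" "y = x - (s+2)" by blast
      have "y \<in> B" using cl big[OF x(1)] x(2) by auto
      moreover have "y \<in> lev s k" using big[OF x(1)] x(2) unfolding lev_def by auto
      ultimately show "y \<in> B \<inter> lev s k" by simp
    qed
    have ba: "s + 2 \<le> a" "a \<in> B" "k*s + 2*k + s + 2 < a" "a < k*s + s + s" using big[OF aC] by auto
    have e1: "a - s \<in> B \<inter> lev s k" using cl ba unfolding lev_def by auto
    have e2: "a - (s+1) \<in> B \<inter> lev s k" using cl ba unfolding lev_def by auto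
    have notin: "a - s \<notin> ?f ` ?C" "a - (s+1) \<notin> ?f ` ?C"
    proof -
      have "\<And>x. x \<in> ?C \<Longrightarrow> x \<le> a" unfolding a_def using finC by simp
      then show "a - s \<notin> ?f ` ?C" "a - (s+1) \<notin> ?f ` ?C" using ba big by force+
    qed
    have sub: "insert (a - s) (insert (a - (s+1)) (?f ` ?C)) \<subseteq> B \<inter> lev s k"
      using img e1 e2 by auto
    have "card (insert (a - s) (insert (a - (s+1)) (?f ` ?C))) = card ?C + 2"
      using notin inj finC ba by (simp add: card_image)
    moreover have "card (insert (a - s) (insert (a - (s+1)) (?f ` ?C))) \<le> card (B \<inter> lev s k)"
      using sub fin by (intro card_mono) auto
    ultimately show "cnt s B (Suc k) + 2 \<le> cnt s B k" unfolding cnt_def by simp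
  qed
qed



definition topi :: "nat \<Rightarrow> nat \<Rightarrow> nat \<Rightarrow> nat set" where
  "topi s k v = {k*s + s - v ..< k*s + s}"

definition TT :: "nat \<Rightarrow> (nat \<Rightarrow> nat) \<Rightarrow> nat set" where
  "TT s n = (\<Union>k<s. topi s k (n k))"

lemma top_lev: assumes "adm s n" shows "topi s k (n k) \<subseteq> lev s k"
proof
  fix x assume x: "x \<in> topi s k (n k)"
  then have "0 < n k" unfolding topi_def by auto
  then have "n k + 2*k + 1 \<le> s" using adm_bound[OF assms] by simp
  then show "x \<in> lev s k" using x unfolding topi_def lev_def by auto
qed

lemma card_top: "v \<le> k*s + s \<Longrightarrow> card (topi s k v) = v"
  unfolding topi_def by simp

lemma top_disj: assumes "adm s n" "k \<noteq> k'" shows "topi s k (n k) \<inter> topi s k' (n k') = {}"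
  using top_lev[OF assms(1), of k] top_lev[OF assms(1), of k'] lev_unique assms(2) by blast

lemma TT_fin: "finite (TT s n)" unfolding TT_def topi_def by simp

lemma TT_clsd: assumes a: "adm s n" and s: "0 < s" shows "clsd s (TT s n)"
  unfolding clsd_def
proof (intro conjI)
  show "finite (TT s n)" by (rule TT_fin)
  show "0 \<notin> TT s n" unfolding TT_def using top_lev[OF a] lev_pos by blast
  show "\<forall>x\<in>TT s n. \<forall>t\<in>{s, s + 1, s + 2}. t \<le> x \<longrightarrow> x - t \<in> TT s n"
  proof (intro ballI impI)
    fix x t assume x: "x \<in> TT s n" and t: "t \<in> {s, s+1, s+2}" and tx: "t \<le> x"
    obtain k where k: "k < s" "x \<in> topi s k (n k)" using x unfolding TT_def by blast
    have ts: "s \<le> t" "t \<le> s + 2" using t by auto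
    show "x - t \<in> TT s n"
    proof (cases k)
      case 0 then show ?thesis using k ts tx unfolding topi_def by simp
    next
      case (Suc k')
      have pos: "0 < n (Suc k')" using k Suc unfolding topi_def by auto
      then have d: "n (Suc k') + 2 \<le> n k'" using a unfolding adm_def by blast
      have b: "n k' + 2*k' + 1 \<le> s" using adm_bound[OF a] d by simp
      have "x - t \<in> topi s k' (n k')" using k Suc ts tx d b unfolding topi_def
        by (auto simp: algebra_simps)
      moreover have "k' < s" using k Suc by simp
      ultimately show ?thesis unfolding TT_def by blast
    qed
  qed
qed

lemma TT_card: assumes a: "adm s n" shows "card (TT s n) = (\<Sum>k<s. n k)"
proof -
  have "card (TT s n) = (\<Sum>k<s. card (topi s k (n k)))"
    unfolding TT_def by (rule card_UN_disjoint) (auto simp: topi_def dest: top_disj[OF a])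
  also have "\<dots> = (\<Sum>k<s. n k)"
  proof (rule sum.cong)
    fix k assume "k \<in> {..<s}"
    show "card (topi s k (n k)) = n k"
    proof (cases "n k = 0")
      case True then show ?thesis unfolding topi_def by simp
    next
      case False
      then have "n k + 2*k + 1 \<le> s" using adm_bound[OF a] by simp
      then show ?thesis by (intro card_top) simp
    qed
  qed simp
  finally show ?thesis .
qed

lemma TT_sum: assumes a: "adm s n" shows "\<Sum>(TT s n) = (\<Sum>k<s. \<Sum>(topi s k (n k)))"
  unfolding TT_def by (rule sum.UNION_disjoint) (auto simp: topi_def dest: top_disj[OF a])

lemma topsum:
  fixes A :: "nat set"
  shows "A \<subseteq> {..<U} \<Longrightarrow> \<Sum>A \<le> \<Sum>{U - card A..<U} \<and> (\<Sum>A = \<Sum>{U - card A..<U} \<longrightarrow> A = {U - card A..<U})"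
proof (induction U arbitrary: A)
  case 0 then show ?case by simp
next
  case (Suc U)
  have finA: "finite A" using Suc.prems finite_subset by blast
  show ?case
  proof (cases "U \<in> A")
    case True
    let ?A' = "A - {U}"
    have sub: "?A' \<subseteq> {..<U}" using Suc.prems by auto
    have "0 < card A" using True finA card_gt_0_iff by blast
    then have cA: "card A = card ?A' + 1" using True finA by (simp add: card_Diff_singleton)
    have cle: "card ?A' \<le> U" using card_mono[OF _ sub] by simp
    have ih: "\<Sum>?A' \<le> \<Sum>{U - card ?A'..<U}" "\<Sum>?A' = \<Sum>{U - card ?A'..<U} \<longrightarrow> ?A' = {U - card ?A'..<U}"
      using Suc.IH[OF sub] by auto
    have sA: "\<Sum>A = U + \<Sum>?A'" using True finA by (simp add: sum.remove)
    have iv: "{Suc U - card A..<Suc U} = insert U {U - card ?A'..<U}" using cA cle by auto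
    have sI: "\<Sum>{Suc U - card A..<Suc U} = U + \<Sum>{U - card ?A'..<U}" unfolding iv by simp
    show ?thesis
    proof
      show "\<Sum>A \<le> \<Sum>{Suc U - card A..<Suc U}" using sA sI ih by simp
      show "\<Sum>A = \<Sum>{Suc U - card A..<Suc U} \<longrightarrow> A = {Suc U - card A..<Suc U}"
      proof
        assume "\<Sum>A = \<Sum>{Suc U - card A..<Suc U}"
        then have "?A' = {U - card ?A'..<U}" using sA sI ih by simp
        then show "A = {Suc U - card A..<Suc U}" unfolding iv using True by blast
      qed
    qed
  next
    case False
    have sub: "A \<subseteq> {..<U}" using Suc.prems False by (auto simp: less_Suc_eq)
    have cle: "card A \<le> U" using card_mono[OF _ sub] by simp
    have ih: "\<Sum>A \<le> \<Sum>{U - card A..<U}" "\<Sum>A = \<Sum>{U - card A..<U} \<longrightarrow> A = {U - card A..<U}"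
      using Suc.IH[OF sub] by auto
    have shift: "\<Sum>{Suc U - card A..<Suc U} = \<Sum>{U - card A..<U} + card A"
    proof -
      have "\<Sum>{Suc U - card A..<Suc U} = (\<Sum>i\<in>{U - card A..<U}. Suc i)"
        using cle sum.shift_bounds_nat_ivl[of "\<lambda>i. i" "U - card A" 1 U] by (simp add: Suc_diff_le)
      also have "\<dots> = (\<Sum>i\<in>{U - card A..<U}. i + 1)" by simp
      also have "\<dots> = \<Sum>{U - card A..<U} + card {U - card A..<U}" by (simp only: sum.distrib) simp
      also have "\<dots> = \<Sum>{U - card A..<U} + card A" using cle by simp
      finally show ?thesis .
    qed
    show ?thesis
    proof
      show "\<Sum>A \<le> \<Sum>{Suc U - card A..<Suc U}" using shift ih by simp
      show "\<Sum>A = \<Sum>{Suc U - card A..<Suc U} \<longrightarrow> A = {Suc U - card A..<Suc U}"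
      proof
        assume e: "\<Sum>A = \<Sum>{Suc U - card A..<Suc U}"
        then have "card A = 0" using shift ih by simp
        then have "A = {}" using finA by simp
        then show "A = {Suc U - card A..<Suc U}" by simp
      qed
    qed
  qed
qed



definition fv :: "nat set \<Rightarrow> nat" where "fv B = psize (partition_of_beta B)"

lemma fv_eq: "clsd s B \<Longrightarrow> fv B + (\<Sum>k<card B. k) = \<Sum>B"
  unfolding fv_def clsd_def using pob_psize by blast

lemma B_T:
  assumes c: "clsd s B" and s: "0 < s"
  shows "card (TT s (cnt s B)) = card B \<and> \<Sum>B \<le> \<Sum>(TT s (cnt s B))
         \<and> (\<Sum>B = \<Sum>(TT s (cnt s B)) \<longrightarrow> B = TT s (cnt s B))"
proof -
  let ?n = "cnt s B"
  have a: "adm s ?n" using cnt_adm[OF c s] .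
  have fin: "finite B" using c unfolding clsd_def by simp
  have Bu: "B = (\<Union>k<s. B \<inter> lev s k)" using closed_sub[OF c s] by blast
  have disj: "\<And>k k'. k \<noteq> k' \<Longrightarrow> (B \<inter> lev s k) \<inter> (B \<inter> lev s k') = {}"
    using lev_unique by blast
  have cardB: "card B = (\<Sum>k<s. ?n k)"
  proof -
    have "card B = card (\<Union>k<s. B \<inter> lev s k)" using Bu by simp
    also have "\<dots> = (\<Sum>k<s. card (B \<inter> lev s k))"
      by (rule card_UN_disjoint) (use fin disj in auto)
    finally show ?thesis unfolding cnt_def .
  qed
  have sumB: "\<Sum>B = (\<Sum>k<s. \<Sum>(B \<inter> lev s k))"
  proof -
    have "\<Sum>B = \<Sum>(\<Union>k<s. B \<inter> lev s k)" using Bu by simp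
    also have "\<dots> = (\<Sum>k<s. \<Sum>(B \<inter> lev s k))"
      by (rule sum.UNION_disjoint) (use fin disj in auto)
    finally show ?thesis .
  qed
  have lvl: "\<Sum>(B \<inter> lev s k) \<le> \<Sum>(topi s k (?n k)) \<and>
     (\<Sum>(B \<inter> lev s k) = \<Sum>(topi s k (?n k)) \<longrightarrow> B \<inter> lev s k = topi s k (?n k))" for k
  proof -
    have "B \<inter> lev s k \<subseteq> {..<k*s + s}" unfolding lev_def by auto
    from topsum[OF this] show ?thesis unfolding topi_def cnt_def by simp
  qed
  have le: "\<Sum>B \<le> \<Sum>(TT s ?n)" unfolding sumB TT_sum[OF a] using lvl by (intro sum_mono) blast
  moreover have "\<Sum>B = \<Sum>(TT s ?n) \<longrightarrow> B = TT s ?n"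
  proof
    assume eq: "\<Sum>B = \<Sum>(TT s ?n)"
    have all: "\<forall>k\<in>{..<s}. \<Sum>(B \<inter> lev s k) = \<Sum>(topi s k (?n k))"
    proof (rule ccontr)
      assume "\<not> ?thesis"
      then obtain k where "k \<in> {..<s}" "\<Sum>(B \<inter> lev s k) \<noteq> \<Sum>(topi s k (?n k))" by blast
      then have "\<exists>k\<in>{..<s}. \<Sum>(B \<inter> lev s k) < \<Sum>(topi s k (?n k))" using lvl le_neq_implies_less by blast
      then have "(\<Sum>k<s. \<Sum>(B \<inter> lev s k)) < (\<Sum>k<s. \<Sum>(topi s k (?n k)))"
        using lvl by (intro sum_strict_mono_ex1) auto
      then show False using eq unfolding sumB TT_sum[OF a] by simp
    qed
    have each: "\<And>k. k \<in> {..<s} \<Longrightarrow> B \<inter> lev s k = topi s k (?n k)" using all lvl by blast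
    have "(\<Union>k<s. B \<inter> lev s k) = (\<Union>k<s. topi s k (?n k))" by (rule SUP_cong) (use each in auto)
    then show "B = TT s ?n" unfolding TT_def using Bu by simp
  qed
  moreover have "card (TT s ?n) = card B" using TT_card[OF a] cardB by simp
  ultimately show ?thesis by blast
qed

lemma top_ins: "v + 1 \<le> k*s + s \<Longrightarrow> topi s k (v + 1) = insert (k*s + s - v - 1) (topi s k v)"
  unfolding topi_def by auto

lemma TT_add:
  assumes a: "adm s n" and a': "adm s (n(l := n l + 1))"
  shows "TT s (n(l := n l + 1)) = insert (l*s + s - n l - 1) (TT s n) \<and> l*s + s - n l - 1 \<notin> TT s n"
proof -
  let ?n' = "n(l := n l + 1)"
  let ?x = "l*s + s - n l - 1"
  have b: "n l + 1 + 2*l + 1 \<le> s" using adm_bound[OF a', of l] by simp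
  then have ls: "l < s" by simp
  have nb: "n l + 1 \<le> l*s + s" using b by linarith
  from top_ins[OF nb] have ti: "topi s l (?n' l) = insert ?x (topi s l (n l))" by simp
  have eq: "TT s ?n' = insert ?x (TT s n)"
  proof
    show "TT s ?n' \<subseteq> insert ?x (TT s n)" unfolding TT_def using ti
      by (auto split: if_splits)
    show "insert ?x (TT s n) \<subseteq> TT s ?n'" unfolding TT_def using ti ls
      by (auto split: if_splits)
  qed
  have xl: "?x \<in> lev s l" using top_lev[OF a', of l] ti by auto
  have "?x \<notin> topi s l (n l)" using nb unfolding topi_def by auto
  moreover have "?x \<notin> topi s k (n k)" if "k \<noteq> l" for k
    using top_lev[OF a, of k] xl lev_unique that by blast
  ultimately have "?x \<notin> TT s n" unfolding TT_def
    by (metis (no_types, lifting) UN_E)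
  with eq show ?thesis by blast
qed

lemma top_rem: "0 < v \<Longrightarrow> v \<le> k*s + s \<Longrightarrow> topi s k (v - 1) = topi s k v - {k*s + s - v}"
  unfolding topi_def by auto

lemma TT_rem:
  assumes a: "adm s n" and a': "adm s (n(l := n l - 1))" and p: "0 < n l"
  shows "TT s (n(l := n l - 1)) = TT s n - {l*s + s - n l} \<and> l*s + s - n l \<in> TT s n"
proof -
  let ?n' = "n(l := n l - 1)"
  let ?x = "l*s + s - n l"
  have b: "n l + 2*l + 1 \<le> s" using adm_bound[OF a p] by simp
  then have ls: "l < s" by simp
  have "n l \<le> l*s + s" using b by linarith
  from top_rem[OF p this] have ti: "topi s l (?n' l) = topi s l (n l) - {?x}" by simp
  have xt: "?x \<in> topi s l (n l)" using p b unfolding topi_def by auto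
  have xl: "?x \<in> lev s l" using top_lev[OF a, of l] xt by auto
  have oth: "?x \<notin> topi s k (n k)" if "k \<noteq> l" for k
    using top_lev[OF a, of k] xl lev_unique that by blast
  have eq: "TT s ?n' = TT s n - {?x}"
  proof
    show "TT s ?n' \<subseteq> TT s n - {?x}" unfolding TT_def using ti oth
      by (auto split: if_splits)
    show "TT s n - {?x} \<subseteq> TT s ?n'" unfolding TT_def using ti ls
      by (auto split: if_splits)
  qed
  moreover have "?x \<in> TT s n" using xt ls unfolding TT_def by blast
  ultimately show ?thesis by blast
qed



lemma main_comb:
  assumes s: "0 < s" and c: "clsd s B" and mx: "\<forall>B'. clsd s B' \<longrightarrow> fv B' \<le> fv B"
  shows "B = TT s (\<lambda>k. cnt s B 0 - 2*k) \<and> cnt s B 0 + 1 \<le> s"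
proof -
  define n where "n = cnt s B"
  have a: "adm s n" unfolding n_def using cnt_adm[OF c s] .
  define T where "T = TT s n"
  have Tc: "clsd s T" unfolding T_def using TT_clsd[OF a s] .
  have bt: "card T = card B" "\<Sum>B \<le> \<Sum>T" "\<Sum>B = \<Sum>T \<longrightarrow> B = T"
    using B_T[OF c s] unfolding T_def n_def by auto
  define G where "G m = (\<Sum>k<m. k)" for m :: nat
  have GS: "G (Suc m) = G m + m" for m unfolding G_def by simp
  have fT: "fv T + G (card T) = \<Sum>T" unfolding G_def using fv_eq[OF Tc] .
  have fB: "fv B + G (card B) = \<Sum>B" unfolding G_def using fv_eq[OF c] .
  have "fv T \<le> fv B" using mx Tc by blast
  moreover have "fv B + G (card T) = \<Sum>B" using fB bt(1) by simp
  ultimately have "\<Sum>B = \<Sum>T" using fT bt(2) by linarith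
  then have BT: "B = T" using bt by simp
  have fTmax: "\<And>X. clsd s X \<Longrightarrow> fv X \<le> fv T" using mx BT by simp
  have step: "n l \<le> n (Suc l) + 2" for l
  proof (rule ccontr)
    assume "\<not> n l \<le> n (Suc l) + 2"
    then have big: "n (Suc l) + 3 \<le> n l" by simp
    define n1 where "n1 = n(Suc l := n (Suc l) + 1)"
    have a1: "adm s n1" unfolding adm_def
    proof (intro conjI allI impI)
      show "n1 0 + 1 \<le> s" using a unfolding n1_def adm_def by simp
      fix k assume "0 < n1 (Suc k)"
      show "n1 (Suc k) + 2 \<le> n1 k"
      proof (cases "k = l")
        case True then show ?thesis using big unfolding n1_def by simp
      next
        case False
        show ?thesis
        proof (cases "k = Suc l")
          case True
          then have "0 < n (Suc (Suc l))" using \<open>0 < n1 (Suc k)\<close> unfolding n1_def by simp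
          then have "n (Suc (Suc l)) + 2 \<le> n (Suc l)" using a unfolding adm_def by blast
          then show ?thesis using True unfolding n1_def by simp
        next
          case False
          then show ?thesis using a \<open>0 < n1 (Suc k)\<close> \<open>k \<noteq> l\<close> unfolding n1_def adm_def by auto
        qed
      qed
    qed
    have b1: "n (Suc l) + 1 + 2 * Suc l + 1 \<le> s" using adm_bound[OF a1, of "Suc l"] unfolding n1_def by simp
    define x1 where "x1 = Suc l * s + s - n (Suc l) - 1"
    have add: "TT s n1 = insert x1 T" "x1 \<notin> T"
      using TT_add[OF a a1[unfolded n1_def]] unfolding n1_def x1_def T_def by auto
    have finT: "finite T" using Tc unfolding clsd_def by simp
    have c1: "clsd s (TT s n1)" using TT_clsd[OF a1 s] .
    have "fv (TT s n1) + G (card (TT s n1)) = \<Sum>(TT s n1)" unfolding G_def using fv_eq[OF c1] .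
    then have "fv (TT s n1) + G (card T) + card T = \<Sum>T + x1"
      using add finT GS by simp
    then have e1: "fv (TT s n1) + card T = fv T + x1" using fT by simp
    have "fv (TT s n1) \<le> fv T" using fTmax c1 .
    then have ineq1: "x1 \<le> card T" using e1 by simp
    define n2 where "n2 = n(l := n l - 1)"
    have pos: "0 < n l" using big by simp
    have a2: "adm s n2" unfolding adm_def
    proof (intro conjI allI impI)
      show "n2 0 + 1 \<le> s" using a unfolding n2_def adm_def by auto
      fix k assume k: "0 < n2 (Suc k)"
      show "n2 (Suc k) + 2 \<le> n2 k"
      proof (cases "k = l")
        case True then show ?thesis using big k unfolding n2_def by simp
      next
        case False
        show ?thesis
        proof (cases "Suc k = l")
          case True
          have "n l + 2 \<le> n k" using a pos True unfolding adm_def by blast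
          then show ?thesis using True False unfolding n2_def by auto
        next
          case False
          then show ?thesis using a k \<open>k \<noteq> l\<close> unfolding n2_def adm_def by auto
        qed
      qed
    qed
    have bl: "n l + 2 * l + 1 \<le> s" using adm_bound[OF a pos] .
    define x2 where "x2 = l * s + s - n l"
    have rem: "TT s n2 = T - {x2}" "x2 \<in> T"
      using TT_rem[OF a a2[unfolded n2_def] pos] unfolding n2_def x2_def T_def by auto
    have c2: "clsd s (TT s n2)" using TT_clsd[OF a2 s] .
    have "0 < card T" using rem finT card_gt_0_iff by blast
    then have cT: "card T = Suc (card (T - {x2}))" using rem finT by (simp add: card_Diff_singleton)
    have sT: "\<Sum>T = x2 + \<Sum>(T - {x2})" using rem finT by (simp add: sum.remove)
    have "fv (TT s n2) + G (card (TT s n2)) = \<Sum>(TT s n2)" unfolding G_def using fv_eq[OF c2] .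
    then have "fv (TT s n2) + G (card (T - {x2})) + x2 = \<Sum>T" using rem sT by simp
    then have e2: "fv (TT s n2) + x2 = fv T + card (T - {x2})" using fT cT GS by simp
    have "fv (TT s n2) \<le> fv T" using fTmax c2 .
    then have ineq2: "card T \<le> x2 + 1" using e2 cT by simp
    have "Suc l * s = l * s + s" by simp
    then show False using ineq1 ineq2 big b1 bl unfolding x1_def x2_def by linarith
  qed
  have form: "n k = n 0 - 2*k" for k
  proof (induction k)
    case 0 then show ?case by simp
  next
    case (Suc k)
    show ?case
    proof (cases "0 < n (Suc k)")
      case True
      then have "n (Suc k) + 2 \<le> n k" using a unfolding adm_def by blast
      then show ?thesis using step[of k] Suc by simp
    next
      case False
      then show ?thesis using step[of k] Suc by simp
    qed
  qed
  define c where "c = n 0"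
  have nf: "n = (\<lambda>k. c - 2*k)"
  proof
    fix k show "n k = c - 2*k" using form[of k] unfolding c_def .
  qed
  have "B = TT s (\<lambda>k. c - 2*k)" using BT nf unfolding T_def by simp
  moreover have "c + 1 \<le> s" using a unfolding adm_def c_def by simp
  ultimately show ?thesis unfolding c_def n_def by simp
qed

lemma TT_beta:
  assumes c1: "1 \<le> c" and cs: "c + 1 \<le> s"
  shows "TT s (\<lambda>k. c - 2*k) = betaij s (s - c) ((c+1) div 2)"
proof (rule set_eqI; rule iffI)
  fix x assume "x \<in> TT s (\<lambda>k. c - 2*k)"
  then obtain k where k: "k < s" "k*s + s - (c - 2*k) \<le> x" "x < k*s + s"
    unfolding TT_def topi_def by auto
  have kc: "2*k < c" using k by (cases "2*k < c") auto
  have e: "k*s + s - (c - 2*k) = (s - c) + k*(s+2)" using kc cs by (simp add: algebra_simps)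
  show "x \<in> betaij s (s - c) ((c+1) div 2)"
  proof (cases "x = (s - c) + k*(s+2)")
    case True
    moreover have "k < (c+1) div 2" using kc by simp
    ultimately show ?thesis unfolding betaij_def by blast
  next
    case False
    then have "s - c + 1 + k*(s+2) \<le> x" using k e by simp
    moreover have "x + 1 \<le> (k+1)*s" using k by simp
    ultimately show ?thesis unfolding betaij_def beta0_def by blast
  qed
next
  fix x assume "x \<in> betaij s (s - c) ((c+1) div 2)"
  then consider (A) k where "s - c + 1 + k*(s+2) \<le> x" "x + 1 \<le> (k+1)*s"
    | (B) p where "p < (c+1) div 2" "x = s - c + p*(s+2)"
    unfolding betaij_def beta0_def by blast
  then show "x \<in> TT s (\<lambda>k. c - 2*k)"
  proof cases
    case A
    have "s - c + 1 + k*s + 2*k \<le> k*s + s - 1" using A by (simp add: algebra_simps)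
    then have kc: "2*k + 2 \<le> c" using cs by linarith
    then have "k < s" using cs by simp
    moreover have "k*s + s - (c - 2*k) \<le> x" "x < k*s + s"
      using A kc cs by (auto simp: algebra_simps)
    ultimately show ?thesis unfolding TT_def topi_def by auto
  next
    case B
    then have pc: "2*p < c" by simp
    then have "p < s" using cs by simp
    moreover have "p*s + s - (c - 2*p) \<le> x" "x < p*s + s"
      using B pc cs by (auto simp: algebra_simps)
    ultimately show ?thesis unfolding TT_def topi_def by auto
  qed
qed

lemma TT_zero: assumes "1 \<le> s" shows "TT s (\<lambda>k. 0 - 2*k) = betaij s (s - 1) 0"
proof -
  have "TT s (\<lambda>k. 0 - 2*k) = {}" unfolding TT_def topi_def by simp
  moreover have "betaij s (s - 1) 0 = {}"
  proof -
    have n: "\<not> (s - 1 + 1 + k*(s+2) \<le> x \<and> x + 1 \<le> (k+1)*s)" for k x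
    proof
      have "s - 1 + 1 = s" using assms by simp
      moreover have "k*(s+2) = k*s + 2*k" by (simp add: algebra_simps)
      moreover have "(k+1)*s = k*s + s" by simp
      moreover assume "s - 1 + 1 + k*(s+2) \<le> x \<and> x + 1 \<le> (k+1)*s"
      ultimately show False by linarith
    qed
    have "beta0 s (s - 1) = {}" unfolding beta0_def using n by blast
    then show ?thesis unfolding betaij_def by simp
  qed
  ultimately show ?thesis by simp
qed



theorem lemma3p2:
  fixes s :: nat and la :: "nat list"
  assumes "s \<ge> 3"
    and "is_partition la" and "is_core3 s la"
    and "\<forall>mu. is_partition mu \<and> is_core3 s mu \<longrightarrow> psize mu \<le> psize la"
  shows "\<exists>i j. 1 \<le> i \<and> i \<le> s - 1 \<and> j \<le> (s - i + 1) div 2 \<and> la = lambdaij s i j"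
proof -
  have s0: "0 < s" using assms(1) by simp
  have p: "is_partition la" by (rule assms(2))
  define B where "B = beta la"
  have cl: "clsd s B" unfolding clsd_def
  proof (intro conjI)
    show "finite B" unfolding B_def beta_eq[OF p] by simp
    show "0 \<notin> B"
    proof
      assume "0 \<in> B"
      then obtain r where "r < length la" "bv la r = 0" unfolding B_def beta_eq[OF p] by auto
      then show False using part_pos[OF p] unfolding bv_def by fastforce
    qed
    show "\<forall>x\<in>B. \<forall>t\<in>{s, s + 1, s + 2}. t \<le> x \<longrightarrow> x - t \<in> B"
      unfolding B_def using closed_beta[OF p assms(3) s0] by blast
  qed
  have fvB: "fv B = psize la" unfolding fv_def B_def beta_pob[OF p] ..
  have mx: "\<forall>B'. clsd s B' \<longrightarrow> fv B' \<le> fv B"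
  proof (intro allI impI)
    fix B' assume c': "clsd s B'"
    have f: "finite B'" "0 \<notin> B'" "\<forall>x\<in>B'. \<forall>t\<in>{s, s+1, s+2}. t \<le> x \<longrightarrow> x - t \<in> B'"
      using c' unfolding clsd_def by auto
    have "is_partition (partition_of_beta B')" using pob_part f by blast
    moreover have "is_core3 s (partition_of_beta B')" using core_pob f by blast
    ultimately have "psize (partition_of_beta B') \<le> psize la" using assms(4) by blast
    then show "fv B' \<le> fv B" using fvB unfolding fv_def by simp
  qed
  define c where "c = cnt s B 0"
  have mc: "B = TT s (\<lambda>k. c - 2*k)" "c + 1 \<le> s" using main_comb[OF s0 cl mx] unfolding c_def by auto
  have la: "la = partition_of_beta B" unfolding B_def beta_pob[OF p] ..
  show ?thesis
  proof (cases "c = 0")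
    case True
    then have "B = betaij s (s - 1) 0" using mc TT_zero[of s] s0 by simp
    then have "la = lambdaij s (s - 1) 0" unfolding la lambdaij_def by simp
    then have "1 \<le> s - 1 \<and> s - 1 \<le> s - 1 \<and> (0::nat) \<le> (s - (s - 1) + 1) div 2 \<and> la = lambdaij s (s - 1) 0"
      using assms(1) by simp
    then show ?thesis by blast
  next
    case False
    then have "B = betaij s (s - c) ((c+1) div 2)" using mc TT_beta[of c s] by simp
    then have "la = lambdaij s (s - c) ((c+1) div 2)" unfolding la lambdaij_def by simp
    moreover have "s - (s - c) + 1 = c + 1" using mc by simp
    ultimately have "1 \<le> s - c \<and> s - c \<le> s - 1 \<and> (c+1) div 2 \<le> (s - (s - c) + 1) div 2 \<and> la = lambdaij s (s - c) ((c+1) div 2)"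
      using False mc by (simp; linarith)
    then show ?thesis by blast
  qed
qed

end
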